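(* Let $X$ be a compact metric space with metric $d$ and let $M\ge1$. If an $M$-Lipschitz continuous map $f\colon X\to X$ satisfies $X=CR(f)$ and has the $L$-Lipschitz shadowing property for some $0<L<M^{-1}$, then $X$ is a finite set.
   Context: A map $f\colon X\to X$ is $M$-Lipschitz continuous if there is $\delta_0>0$ such that $d(f(x),f(y))\le Md(x,y)$ for all $x,y\in X$ with $d(x,y)\le\delta_0$. For $\delta>0$, a sequence $(x_i)_{i\ge0}$ is a $\delta$-pseudo orbit of $f$ if $d(f(x_i),x_{i+1})\le\delta$ for all $i\ge0$; it is $\epsilon$-shadowed by $x$ if $d(f^i(x),x_i)\le\epsilon$ for all $i\ge0$. For $L>0$, $f$ has the $L$-Lipschitz shadowing property if there is $\delta_0>0$ such that for every $0<\delta\le\delta_0$, every $\delta$-pseudo orbit of $f$ is $L\delta$-shadowed by some point of $X$. A $\delta$-chain is a finite sequence $(x_i)_{i=0}^k$, $k\ge1$, with $d(f(x_i),x_{i+1})\le\delta$ for $0\le i\le k-1$; a $\delta$-cycle is a $\delta$-chain with $x_0=x_k$. $CR(f)$ is the set of $x\in X$ such that for every $\delta>0$ there is a $\delta$-cycle with $x_0=x_k=x$. *)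

theory Defs
  imports "HOL-Analysis.Analysis"
begin

text \<open>The metric space is a subset X of a metric space type, with the induced metric.\<close>

definition M_lipschitz :: "'a::metric_space set \<Rightarrow> ('a \<Rightarrow> 'a) \<Rightarrow> real \<Rightarrow> bool" where
  "M_lipschitz X f M \<longleftrightarrow> (\<exists>\<delta>0>0. \<forall>x\<in>X. \<forall>y\<in>X. dist x y \<le> \<delta>0 \<longrightarrow> dist (f x) (f y) \<le> M * dist x y)"

definition pseudo_orbit :: "'a::metric_space set \<Rightarrow> ('a \<Rightarrow> 'a) \<Rightarrow> real \<Rightarrow> (nat \<Rightarrow> 'a) \<Rightarrow> bool" where
  "pseudo_orbit X f \<delta> xs \<longleftrightarrow> (\<forall>i. xs i \<in> X) \<and> (\<forall>i. dist (f (xs i)) (xs (Suc i)) \<le> \<delta>)"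

definition shadowed :: "('a::metric_space \<Rightarrow> 'a) \<Rightarrow> real \<Rightarrow> (nat \<Rightarrow> 'a) \<Rightarrow> 'a \<Rightarrow> bool" where
  "shadowed f \<epsilon> xs x \<longleftrightarrow> (\<forall>i. dist ((f ^^ i) x) (xs i) \<le> \<epsilon>)"

definition lipschitz_shadowing :: "'a::metric_space set \<Rightarrow> ('a \<Rightarrow> 'a) \<Rightarrow> real \<Rightarrow> bool" where
  "lipschitz_shadowing X f L \<longleftrightarrow> (\<exists>\<delta>0>0. \<forall>\<delta>. 0 < \<delta> \<and> \<delta> \<le> \<delta>0 \<longrightarrow>
      (\<forall>xs. pseudo_orbit X f \<delta> xs \<longrightarrow> (\<exists>x\<in>X. shadowed f (L * \<delta>) xs x)))"

definition delta_chain :: "'a::metric_space set \<Rightarrow> ('a \<Rightarrow> 'a) \<Rightarrow> real \<Rightarrow> (nat \<Rightarrow> 'a) \<Rightarrow> nat \<Rightarrow> bool" where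
  "delta_chain X f \<delta> xs k \<longleftrightarrow> k \<ge> 1 \<and> (\<forall>i\<le>k. xs i \<in> X) \<and> (\<forall>i<k. dist (f (xs i)) (xs (Suc i)) \<le> \<delta>)"

definition chain_recurrent_set :: "'a::metric_space set \<Rightarrow> ('a \<Rightarrow> 'a) \<Rightarrow> 'a set" where
  "chain_recurrent_set X f = {x\<in>X. \<forall>\<delta>>0. \<exists>xs k. delta_chain X f \<delta> xs k \<and> xs 0 = x \<and> xs k = x}"

end

theory Submission
  imports Defs
begin

inductive chainable :: "'a::metric_space set \<Rightarrow> real \<Rightarrow> 'a \<Rightarrow> 'a \<Rightarrow> bool" for X e where
  crefl: "a \<in> X \<Longrightarrow> chainable X e a a"
| cstep: "chainable X e a b \<Longrightarrow> c \<in> X \<Longrightarrow> dist b c \<le> e \<Longrightarrow> chainable X e a c"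

lemma chainable_trans:
  assumes "chainable X e b c" "chainable X e a b" shows "chainable X e a c"
  using assms by (induction rule: chainable.induct) (auto intro: chainable.intros)

lemma chainable_mono:
  assumes "chainable X e a b" "e \<le> e'" shows "chainable X e' a b"
  using assms by (induction rule: chainable.induct) (auto intro: chainable.intros)

locale LS =
  fixes X :: "'a::metric_space set" and f :: "'a \<Rightarrow> 'a" and M L dl ds :: real
  assumes fX: "f ` X \<subseteq> X" and M1: "M \<ge> 1" and Lpos: "0 < L" and lam1: "L*M < 1"
  and dl: "0 < dl" and lip: "\<forall>x\<in>X. \<forall>y\<in>X. dist x y \<le> dl \<longrightarrow> dist (f x) (f y) \<le> M * dist x y"
  and ds: "0 < ds" and sh: "\<forall>\<delta>. 0 < \<delta> \<and> \<delta> \<le> ds \<longrightarrow> (\<forall>xs. pseudo_orbit X f \<delta> xs \<longrightarrow> (\<exists>x\<in>X. shadowed f (L * \<delta>) xs x))"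
  and cr: "X = chain_recurrent_set X f"
  and cpt: "compact X"
begin

lemma funpow_X: "x \<in> X \<Longrightarrow> (f^^n) x \<in> X"
  using fX by (induction n) auto

lemma cont_f: "continuous_on X f"
  unfolding continuous_on_iff
proof (intro ballI allI impI)
  fix x e assume x: "x \<in> X" and e: "(0::real) < e"
  have M0: "M > 0" using M1 by simp
  show "\<exists>d>0. \<forall>x'\<in>X. dist x' x < d \<longrightarrow> dist (f x') (f x) < e"
  proof (intro exI[of _ "min dl (e/M)"] conjI ballI impI)
    show "0 < min dl (e/M)" using dl e M0 by simp
    fix x' assume x': "x' \<in> X" and d: "dist x' x < min dl (e/M)"
    have "dist (f x') (f x) \<le> M * dist x' x" using lip x x' d by auto
    also have "\<dots> < M * (e/M)" using d M0 by (intro mult_strict_left_mono) auto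
    also have "\<dots> = e" using M0 by simp
    finally show "dist (f x') (f x) < e" .
  qed
qed

lemma cont_fn: "continuous_on X (f^^n)"
proof (induction n)
  case 0 then show ?case by (simp add: continuous_on_id)
next
  case (Suc n)
  have "(f^^n) ` X \<subseteq> X" using funpow_X by auto
  then have "continuous_on ((f^^n) ` X) f" using cont_f continuous_on_subset by blast
  then show ?case unfolding funpow.simps(2) by (rule continuous_on_compose[OF Suc])
qed

lemma surj: assumes "x \<in> X" shows "\<exists>w\<in>X. f w = x"
proof -
  have cl: "closed (f ` X)"
    using compact_continuous_image[OF cont_f cpt] compact_imp_closed by blast
  have "\<forall>e>0. \<exists>y\<in>f ` X. dist y x < e"
  proof (intro allI impI)
    fix e :: real assume e: "0 < e"
    have "x \<in> chain_recurrent_set X f" using assms cr by simp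
    then have "\<forall>\<delta>>0. \<exists>xs k. delta_chain X f \<delta> xs k \<and> xs 0 = x \<and> xs k = x"
      unfolding chain_recurrent_set_def by blast
    moreover have "e/2 > 0" using e by simp
    ultimately obtain xs k where c: "delta_chain X f (e/2) xs k" "xs 0 = x" "xs k = x"
      by blast
    then have k: "k \<ge> 1" unfolding delta_chain_def by simp
    have "xs (k-1) \<in> X" using c unfolding delta_chain_def by simp
    moreover have "k - 1 < k" using k by simp
    then have "dist (f (xs (k-1))) (xs (Suc (k-1))) \<le> e/2" using c(1) unfolding delta_chain_def by blast
    moreover have "Suc (k-1) = k" using k by simp
    ultimately have "dist (f (xs (k-1))) x \<le> e/2" "f (xs (k-1)) \<in> f ` X" using c(3) by auto
    then show "\<exists>y\<in>f ` X. dist y x < e" using e by (intro bexI[of _ "f (xs (k-1))"]) auto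
  qed
  then have "x \<in> f ` X" using closed_approachable[OF cl] by blast
  then show ?thesis by auto
qed


lemma lam_facts: "0 < L*M" "L*M < 1" "L \<le> L*M" "L < 1"
proof -
  show "0 < L*M" using Lpos M1 by simp
  show "L*M < 1" using lam1 .
  show le: "L \<le> L*M" using Lpos M1 by (simp add: mult_le_cancel_left1)
  show "L < 1" using le lam1 by simp
qed

lemma self_shadow:
  assumes po: "pseudo_orbit X f \<sigma> xs" and s0: "0 < \<sigma>" and s1: "\<sigma> \<le> ds" and s2: "\<sigma> \<le> dl"
  shows "dist ((f^^i) (xs 0)) (xs i) \<le> L*\<sigma>/(1-L*M)"
proof -
  define lam where "lam = L*M"
  define a where "a = xs 0"
  define c where "c = lam/(1-lam)"
  define B where "B = L*\<sigma>/(1-lam)"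
  have l0: "0 < lam" "lam < 1" "L \<le> lam" "L < 1" using lam_facts unfolding lam_def by auto
  have c0: "c \<ge> 0" unfolding c_def using l0 by simp
  have a: "a \<in> X" using po unfolding a_def pseudo_orbit_def by simp
  have cB: "L*\<sigma> + c*(L*\<sigma>) = B" unfolding c_def B_def using l0 by (simp add: field_simps)
  have "c*(1-lam) = lam" unfolding c_def using l0 by simp
  then have key: "c - c*lam = lam" by (simp add: algebra_simps)
  have Ls: "L*\<sigma> \<le> \<sigma>" using l0 s0 by simp
  have claim: "\<exists>w\<in>X. dist ((f^^i) w) (xs i) + c*dist w a \<le> B \<and> dist w a \<le> lam^n*(L*\<sigma>)" for n
  proof (induction n)
    case 0
    obtain z where z: "z\<in>X" "shadowed f (L*\<sigma>) xs z" using sh s0 s1 po by blast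
    then have zz: "\<forall>j. dist ((f^^j) z) (xs j) \<le> L*\<sigma>" unfolding shadowed_def by simp
    then have d0: "dist z a \<le> L*\<sigma>" unfolding a_def using spec[OF zz, of 0] by simp
    have "c*dist z a \<le> c*(L*\<sigma>)" using d0 c0 by (simp add: mult_left_mono)
    then have "dist ((f^^i) z) (xs i) + c*dist z a \<le> B" using zz cB by (smt (verit))
    then show ?case using z d0 by auto
  next
    case (Suc n)
    then obtain w where w: "w\<in>X" "dist ((f^^i) w) (xs i) + c*dist w a \<le> B" "dist w a \<le> lam^n*(L*\<sigma>)"
      by blast
    define r where "r = dist w a"
    show ?case
    proof (cases "r = 0")
      case True
      then have wa: "w = a" unfolding r_def by simp
      have "0 \<le> lam^(Suc n)*(L*\<sigma>)" using l0 s0 Lpos by simp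
      then show ?thesis using w wa by (intro bexI[of _ w]) auto
    next
      case False
      then have r0: "0 < r" unfolding r_def by simp
      have "lam^n \<le> 1" using l0 by (simp add: power_le_one)
      then have "lam^n*(L*\<sigma>) \<le> L*\<sigma>" using Lpos s0 by (simp add: mult_left_le_one_le)
      then have rLs: "r \<le> L*\<sigma>" using w(3) unfolding r_def by simp
      define ys where "ys j = (if j=0 then a else (f^^j) w)" for j
      have po2: "pseudo_orbit X f (M*r) ys"
        unfolding pseudo_orbit_def
      proof (intro conjI allI)
        fix j show "ys j \<in> X" unfolding ys_def using a w(1) funpow_X by simp
      next
        fix j
        show "dist (f (ys j)) (ys (Suc j)) \<le> M*r"
        proof (cases "j = 0")
          case True
          have "dist a w \<le> dl" using rLs Ls s2 unfolding r_def by (simp add: dist_commute)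
          then have "dist (f a) (f w) \<le> M * dist a w" using lip a w(1) by blast
          then show ?thesis using True unfolding ys_def r_def by (simp add: dist_commute)
        next
          case False
          then show ?thesis unfolding ys_def using r0 M1 by simp
        qed
      qed
      have Mr: "0 < M*r" "M*r \<le> ds"
      proof -
        show "0 < M*r" using r0 M1 by simp
        have "M*r \<le> M*(L*\<sigma>)" using rLs M1 by simp
        also have "\<dots> = lam*\<sigma>" unfolding lam_def by simp
        also have "\<dots> \<le> \<sigma>" using l0 s0 by simp
        finally show "M*r \<le> ds" using s1 by simp
      qed
      obtain w' where w': "w'\<in>X" "shadowed f (L*(M*r)) ys w'" using sh Mr po2 by blast
      then have ww: "\<forall>j. dist ((f^^j) w') (ys j) \<le> lam*r" unfolding shadowed_def lam_def
        by (simp add: mult.assoc)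
      have d0: "dist w' a \<le> lam*r" using spec[OF ww, of 0] unfolding ys_def by simp
      have lr: "lam*r \<le> r" using l0 r0 by simp
      have goal1: "dist ((f^^i) w') (xs i) + c*dist w' a \<le> B"
      proof (cases "i = 0")
        case True
        have "dist w' a + c * dist w' a = (1+c)*dist w' a" by (simp add: algebra_simps)
        also have "\<dots> \<le> (1+c)*(L*\<sigma>)" using d0 lr rLs c0 by (intro mult_left_mono) auto
        also have "\<dots> = B" using cB by (simp add: algebra_simps)
        finally show ?thesis using True unfolding a_def by simp
      next
        case False
        have "dist ((f^^i) w') ((f^^i) w) \<le> lam*r" using spec[OF ww, of i] False unfolding ys_def by simp
        then have "dist ((f^^i) w') (xs i) \<le> lam*r + dist ((f^^i) w) (xs i)"
          using dist_triangle[of "(f^^i) w'" "xs i" "(f^^i) w"] by simp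
        moreover have "c*dist w' a \<le> c*(lam*r)" using d0 c0 by (simp add: mult_left_mono)
        moreover have "lam*r + c*(lam*r) - c*r = (lam + c*lam - c)*r" by (simp add: algebra_simps)
        then have "lam*r + c*(lam*r) - c*r = 0" using key by simp
        ultimately show ?thesis using w(2) unfolding r_def by (smt (verit))
      qed
      have "dist w' a \<le> lam^(Suc n)*(L*\<sigma>)"
      proof -
        have "lam*r \<le> lam*(lam^n*(L*\<sigma>))" using w(3) l0 unfolding r_def by simp
        then show ?thesis using d0 by (simp add: mult.assoc)
      qed
      then show ?thesis using goal1 w'(1) by blast
    qed
  qed
  have cont: "continuous_on X (f^^i)" by (rule cont_fn)
  have "dist ((f^^i) a) (xs i) \<le> B"
  proof (rule field_le_epsilon)
    fix e :: real assume e: "0 < e"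
    obtain d where d: "d > 0" "\<forall>x'\<in>X. dist x' a < d \<longrightarrow> dist ((f^^i) x') ((f^^i) a) < e"
      using cont a e unfolding continuous_on_iff by blast
    have "d/(L*\<sigma>) > 0" using d Lpos s0 by simp
    then obtain n where n: "lam^n < d/(L*\<sigma>)" using real_arch_pow_inv l0 by blast
    then have "lam^n*(L*\<sigma>) < d" using Lpos s0 by (simp add: field_simps)
    then obtain w where w: "w\<in>X" "dist ((f^^i) w) (xs i) + c*dist w a \<le> B" "dist w a < d"
      using claim[of n] by force
    have "dist ((f^^i) w) ((f^^i) a) < e" using d w by blast
    moreover have "c*dist w a \<ge> 0" using c0 by simp
    ultimately show "dist ((f^^i) a) (xs i) \<le> B + e"
      using w(2) dist_triangle[of "(f^^i) a" "xs i" "(f^^i) w"] by (simp add: dist_commute)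
  qed
  then show ?thesis unfolding a_def B_def lam_def .
qed


lemma recur:
  assumes p: "p \<in> X" and d: "0 < \<delta>" "\<delta> \<le> ds" "\<delta> \<le> dl"
  shows "\<exists>k\<ge>1. \<forall>t. dist ((f^^(t*k)) p) p \<le> L*\<delta>/(1-L*M)"
proof -
  have "p \<in> chain_recurrent_set X f" using p cr by simp
  then obtain c k where c: "delta_chain X f \<delta> c k" "c 0 = p" "c k = p"
    unfolding chain_recurrent_set_def using d(1) by blast
  have k: "k \<ge> 1" and cX: "\<forall>i\<le>k. c i \<in> X" and cs: "\<forall>i<k. dist (f (c i)) (c (Suc i)) \<le> \<delta>"
    using c(1) unfolding delta_chain_def by auto
  define xs where "xs i = c (i mod k)" for i
  have po: "pseudo_orbit X f \<delta> xs"
    unfolding pseudo_orbit_def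
  proof (intro conjI allI)
    fix i
    have "i mod k < k" using k by simp
    then show "xs i \<in> X" unfolding xs_def using cX by simp
  next
    fix i
    define j where "j = i mod k"
    have j: "j < k" unfolding j_def using k by simp
    have "xs (Suc i) = c (Suc j)"
      unfolding xs_def j_def mod_Suc using c(2,3) by simp
    then show "dist (f (xs i)) (xs (Suc i)) \<le> \<delta>" using cs j unfolding xs_def j_def by simp
  qed
  have "\<forall>t. dist ((f^^(t*k)) p) p \<le> L*\<delta>/(1-L*M)"
  proof
    fix t
    have "dist ((f^^(t*k)) (xs 0)) (xs (t*k)) \<le> L*\<delta>/(1-L*M)"
      by (rule self_shadow[OF po d])
    moreover have "xs 0 = p" "xs (t*k) = p" unfolding xs_def using c(2) by auto
    ultimately show "dist ((f^^(t*k)) p) p \<le> L*\<delta>/(1-L*M)" by simp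
  qed
  then show ?thesis using k by blast
qed

lemma reach:
  assumes ch: "chainable X e a b" and e: "0 \<le> e" and rho: "0 \<le> \<rho>" and k: "k \<ge> (1::nat)"
    and per: "\<forall>q\<in>X. \<exists>kq\<ge>1. \<forall>t. dist ((f^^(t*kq)) q) q \<le> \<rho>"
  shows "\<exists>xs N. xs 0 = a \<and> xs N = b \<and> k dvd N \<and> pseudo_orbit X f (\<rho>+e) xs"
  using ch
proof (induction rule: chainable.induct)
  case (crefl u)
  have "pseudo_orbit X f (\<rho>+e) (\<lambda>i. (f^^i) u)" unfolding pseudo_orbit_def
    using crefl.hyps funpow_X rho e by simp
  then show ?case by (intro exI[of _ "\<lambda>i. (f^^i) u"] exI[of _ 0]) simp
next
  case (cstep a b c)
  then obtain xs N where xs: "xs 0 = a" "xs N = b" "k dvd N" "pseudo_orbit X f (\<rho>+e) xs" by blast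
  have bX: "b \<in> X" using xs unfolding pseudo_orbit_def by metis
  obtain kb where kb: "kb \<ge> 1" "\<forall>t. dist ((f^^(t*kb)) b) b \<le> \<rho>" using per bX by blast
  define T where "T = k*kb"
  have T1: "T \<ge> 1" unfolding T_def using k kb by simp
  have fT: "dist ((f^^T) b) b \<le> \<rho>" using kb(2) unfolding T_def by blast
  define ys where "ys i = (if i \<le> N then xs i else if i < N+T then (f^^(i-N)) b else (f^^(i-N-T)) c)" for i
  have ysN: "ys i = (f^^(i-N)) b" if "N \<le> i" "i < N+T" for i
    using that xs(2) unfolding ys_def by (cases "i = N") auto
  have po: "pseudo_orbit X f (\<rho>+e) ys"
    unfolding pseudo_orbit_def
  proof (intro conjI allI)
    fix i show "ys i \<in> X" unfolding ys_def
      using xs(4) funpow_X bX cstep.hyps(2) unfolding pseudo_orbit_def by auto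
  next
    fix i
    show "dist (f (ys i)) (ys (Suc i)) \<le> \<rho>+e"
    proof (cases "i < N")
      case True
      then show ?thesis using xs(4) unfolding pseudo_orbit_def ys_def by auto
    next
      case False
      show ?thesis
      proof (cases "Suc i < N+T")
        case True
        have "ys i = (f^^(i-N)) b" "ys (Suc i) = (f^^(Suc i - N)) b" using False True ysN by auto
        moreover have "Suc i - N = Suc (i - N)" using False by simp
        ultimately show ?thesis using rho e by simp
      next
        case F2: False
        show ?thesis
        proof (cases "Suc i = N+T")
          case True
          have "ys i = (f^^(i-N)) b" using False True T1 ysN by auto
          moreover have "ys (Suc i) = c" using True T1 unfolding ys_def by simp
          moreover have "f ((f^^(i-N)) b) = (f^^T) b"
          proof -
            have "Suc (i-N) = T" using True False by simp
            then show ?thesis by (metis funpow.simps(2) o_apply)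
          qed
          moreover have "dist ((f^^T) b) c \<le> \<rho> + e"
            using fT cstep.hyps(3) dist_triangle[of "(f^^T) b" c b] by simp
          ultimately show ?thesis by simp
        next
          case False
          then have "i \<ge> N+T" using F2 by simp
          then have "ys i = (f^^(i-N-T)) c" "ys (Suc i) = (f^^(Suc i-N-T)) c" unfolding ys_def using T1 by auto
          moreover have "Suc i - N - T = Suc (i-N-T)" using \<open>i \<ge> N+T\<close> by simp
          ultimately show ?thesis using rho e by simp
        qed
      qed
    qed
  qed
  have "ys 0 = a" unfolding ys_def using xs(1) by simp
  moreover have "ys (N+T) = c" unfolding ys_def using T1 by simp
  moreover have "k dvd N+T" using xs(3) unfolding T_def by simp
  ultimately show ?case using po by blast
qed


lemma midpoint:
  assumes u: "u \<in> X" and v: "v \<in> X" and d: "0 < dist u v" "dist u v \<le> ds" "dist u v \<le> dl"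
  shows "\<exists>p\<in>X. dist u p \<le> L*M*dist u v \<and> dist p v \<le> L*M*dist u v"
proof -
  obtain w where w: "w \<in> X" "f w = u" using surj u by blast
  define ys where "ys j = (if j = 0 then w else (f^^(j-1)) v)" for j
  have po: "pseudo_orbit X f (dist u v) ys"
    unfolding pseudo_orbit_def
  proof (intro conjI allI)
    fix j show "ys j \<in> X" unfolding ys_def using w v funpow_X by simp
  next
    fix j show "dist (f (ys j)) (ys (Suc j)) \<le> dist u v"
    proof (cases "j = 0")
      case True then show ?thesis unfolding ys_def using w by simp
    next
      case False
      then have "Suc (j-1) = j" by simp
      then have "f ((f^^(j-1)) v) = (f^^j) v" by (metis funpow.simps(2) o_apply)
      then show ?thesis unfolding ys_def using False by simp
    qed
  qed
  obtain z where z: "z \<in> X" "shadowed f (L*dist u v) ys z" using sh po d by blast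
  then have zz: "\<forall>j. dist ((f^^j) z) (ys j) \<le> L*dist u v" unfolding shadowed_def by simp
  have z0: "dist z w \<le> L*dist u v" using spec[OF zz, of 0] unfolding ys_def by simp
  have z1: "dist (f z) v \<le> L*dist u v" using spec[OF zz, of 1] unfolding ys_def by simp
  have "L*dist u v \<le> dist u v" using lam_facts d by simp
  then have "dist z w \<le> dl" using z0 d by linarith
  then have "dist (f z) (f w) \<le> M * dist z w" using lip z w by blast
  also have "\<dots> \<le> M * (L*dist u v)" using z0 M1 by simp
  finally have a1: "dist u (f z) \<le> L*M*dist u v" using w by (simp add: dist_commute mult_ac)
  have "L*dist u v \<le> L*M*dist u v" using mult_right_mono[OF lam_facts(3) zero_le_dist[of u v]] by simp
  then have a2: "dist (f z) v \<le> L*M*dist u v" using z1 by simp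
  show ?thesis using a1 a2 fX z by blast
qed

lemma chain_lemma:
  "\<forall>r u v. 0 \<le> r \<longrightarrow> r \<le> min ds dl \<longrightarrow> u \<in> X \<longrightarrow> v \<in> X \<longrightarrow> dist u v \<le> r \<longrightarrow>
     chainable X ((L*M)^n * r) u v"
proof (induction n)
  case 0
  show ?case using chainable.intros by (metis mult_1 power_0)
next
  case (Suc n)
  show ?case
  proof (intro allI impI)
    fix r u v assume r: "0 \<le> r" "r \<le> min ds dl" and u: "u \<in> X" and v: "v \<in> X" and d: "dist u v \<le> r"
    show "chainable X ((L*M)^Suc n * r) u v"
    proof (cases "u = v")
      case True then show ?thesis using u chainable.crefl by simp
    next
      case False
      have "0 < dist u v" "dist u v \<le> ds" "dist u v \<le> dl" using False d r by auto
      then obtain p where p: "p \<in> X" "dist u p \<le> L*M*dist u v" "dist p v \<le> L*M*dist u v"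
        using midpoint[OF u v] by blast
      have lr: "L*M*dist u v \<le> L*M*r" using d lam_facts by (intro mult_left_mono) auto
      have "L*M*r \<le> r" using lam_facts r by (simp add: mult_left_le_one_le)
      then have "chainable X ((L*M)^n * (L*M*r)) u p" "chainable X ((L*M)^n * (L*M*r)) p v"
        using Suc.IH p u v r lr lam_facts by auto
      then show ?thesis using chainable_trans by (simp add: mult_ac)
    qed
  qed
qed

lemma discrete:
  assumes a: "a \<in> X" and b: "b \<in> X" and d: "dist a b < min ds dl"
  shows "a = b"
proof -
  define K where "K = L/(1-L*M)"
  have K0: "K \<ge> 0" unfolding K_def using lam_facts Lpos by (intro divide_nonneg_pos) auto
  define dA where "dA = min ds dl"
  have dA: "0 < dA" unfolding dA_def using ds dl by simp
  have Kmul: "L*x/(1-L*M) = K*x" for x unfolding K_def by simp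
  have allch: "chainable X \<epsilon> a b" if e: "\<epsilon> > 0" for \<epsilon>
  proof -
    have "\<epsilon>/dA > 0" using e dA by simp
    then obtain n where n: "(L*M)^n < \<epsilon>/dA" using real_arch_pow_inv lam_facts by blast
    then have "(L*M)^n * dA \<le> \<epsilon>" using dA by (simp add: field_simps)
    moreover have "chainable X ((L*M)^n * dA) a b"
      using chain_lemma[of n] a b d dA unfolding dA_def by auto
    ultimately show ?thesis using chainable_mono by blast
  qed
  have "dist a b \<le> 0"
  proof (rule field_le_epsilon)
    fix e :: real assume e: "0 < e"
    define C where "C = K + K*(K+1) + 1"
    have C: "C > 0" unfolding C_def using K0 by (simp add: add_nonneg_pos)
    define \<epsilon> where "\<epsilon> = min (e/C) (dA/(K+1))"
    have e0: "\<epsilon> > 0" unfolding \<epsilon>_def using e C dA K0 by simp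
    have "\<epsilon> \<le> e/C" unfolding \<epsilon>_def by simp
    then have eC: "C*\<epsilon> \<le> e" using C by (simp add: pos_le_divide_eq mult.commute)
    have "\<epsilon> \<le> dA/(K+1)" unfolding \<epsilon>_def by simp
    then have eA: "(K+1)*\<epsilon> \<le> dA" using K0 by (simp add: pos_le_divide_eq mult.commute)
    have eA2: "\<epsilon> \<le> dA" using eA e0 K0 by (smt (verit) mult_le_cancel_right1)
    have per: "\<forall>q\<in>X. \<exists>kq\<ge>1. \<forall>t. dist ((f^^(t*kq)) q) q \<le> K*\<epsilon>"
      using recur[of _ \<epsilon>] e0 eA2 Kmul unfolding dA_def by auto
    then obtain k where k: "k \<ge> 1" "\<forall>t. dist ((f^^(t*k)) a) a \<le> K*\<epsilon>" using a by blast
    obtain xs N where xs: "xs 0 = a" "xs N = b" "k dvd N" "pseudo_orbit X f (K*\<epsilon>+\<epsilon>) xs"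
      using reach[OF allch[OF e0] _ _ k(1) per] e0 K0 by auto
    have Ke: "0 \<le> K*\<epsilon>" using K0 e0 by simp
    have "K*\<epsilon>+\<epsilon> = (K+1)*\<epsilon>" by (simp add: algebra_simps)
    then have s: "0 < K*\<epsilon>+\<epsilon>" "K*\<epsilon>+\<epsilon> \<le> ds" "K*\<epsilon>+\<epsilon> \<le> dl"
      using e0 Ke eA unfolding dA_def by linarith+
    have d1: "dist ((f^^N) a) b \<le> K*(K*\<epsilon>+\<epsilon>)"
      using self_shadow[OF xs(4) s, of N] xs Kmul by simp
    obtain t where "N = k*t" using xs(3) by (rule dvdE)
    then have "N = t*k" by simp
    then have d2: "dist ((f^^N) a) a \<le> K*\<epsilon>" using k by simp
    have "dist a b \<le> K*\<epsilon> + K*(K*\<epsilon>+\<epsilon>)"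
      using d1 d2 dist_triangle[of a b "(f^^N) a"] by (simp add: dist_commute)
    also have "\<dots> = (K + K*(K+1))*\<epsilon>" by (simp add: algebra_simps)
    also have "\<dots> \<le> C*\<epsilon>" unfolding C_def using e0 by simp
    finally show "dist a b \<le> 0 + e" using eC by simp
  qed
  then show ?thesis by simp
qed

lemma finite_X: "finite X"
proof -
  define r where "r = min ds dl"
  have r: "r > 0" unfolding r_def using ds dl by simp
  have "X \<subseteq> (\<Union>c\<in>X. ball c r)" using r by auto
  then obtain C where C: "C \<subseteq> X" "finite C" "X \<subseteq> (\<Union>c\<in>C. ball c r)"
    using compactE_image[OF cpt, of X "\<lambda>c. ball c r"] by blast
  have "X \<subseteq> C"
  proof
    fix x assume x: "x \<in> X"
    then obtain c where c: "c \<in> C" "x \<in> ball c r" using C by blast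
    then have "c = x" using discrete[of c x] C x unfolding r_def by auto
    then show "x \<in> C" using c by simp
  qed
  then show ?thesis using C finite_subset by blast
qed

end


theorem theorem1p3:
  fixes X :: "'a::metric_space set" and f :: "'a \<Rightarrow> 'a" and M L :: real
  assumes "compact X"
    and "f ` X \<subseteq> X"
    and "M \<ge> 1"
    and "M_lipschitz X f M"
    and "X = chain_recurrent_set X f"
    and "0 < L" and "L < 1 / M"
    and "lipschitz_shadowing X f L"
  shows "finite X"
proof -
  obtain dl where dl: "dl > 0" "\<forall>x\<in>X. \<forall>y\<in>X. dist x y \<le> dl \<longrightarrow> dist (f x) (f y) \<le> M * dist x y"
    using assms(4) unfolding M_lipschitz_def by blast
  obtain ds where ds: "ds > 0" "\<forall>\<delta>. 0 < \<delta> \<and> \<delta> \<le> ds \<longrightarrow> (\<forall>xs. pseudo_orbit X f \<delta> xs \<longrightarrow> (\<exists>x\<in>X. shadowed f (L * \<delta>) xs x))"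
    using assms(8) unfolding lipschitz_shadowing_def by blast
  have "L*M < 1" using assms(3,7) by (simp add: pos_less_divide_eq)
  then interpret LS X f M L dl ds
    using assms dl ds by unfold_locales auto
  show ?thesis by (rule finite_X)
qed

end
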